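(* Let $a,b,k\in\mathbb{N}$ with $k\le\min(a,b)$. Then $\mathcal{D}_k([a]\times[b])\cong\mathcal{C}(a,k)\times\mathcal{C}(b,k)$ as posets.
   Context: $[n]=\{1,\dots,n\}$ and $\mathbb{Z}_+^2$ carries the product order. A Ferrers diagram is a finite order ideal of $\mathbb{Z}_+^2$. The Durfee length of a Ferrers diagram $D$ is the largest $k\in\mathbb{N}$ with $[k]\times[k]\subseteq D$. $\mathcal{D}_k([a]\times[b])$ is the set of Ferrers diagrams of Durfee length exactly $k$ contained in $[a]\times[b]$, ordered by inclusion. For $k\le n$, $\mathcal{C}(n,k)$ is the set of $k$-element subsets of $[n]$, each written as an increasing sequence $(x_1<\dots<x_k)$, with $\mathbf{x}\le\mathbf{y}$ iff $x_i\le y_i$ for all $i$; products of posets carry the product order. *)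

theory Defs
  imports Main
begin

definition ferrers :: "(nat \<times> nat) set \<Rightarrow> bool" where
  "ferrers D \<longleftrightarrow> finite D \<and> D \<subseteq> {1..} \<times> {1..} \<and>
     (\<forall>i j i' j'. (i, j) \<in> D \<longrightarrow> 1 \<le> i' \<longrightarrow> i' \<le> i \<longrightarrow> 1 \<le> j' \<longrightarrow> j' \<le> j \<longrightarrow> (i', j') \<in> D)"

definition durfee :: "(nat \<times> nat) set \<Rightarrow> nat" where
  "durfee D = (GREATEST k. {1..k} \<times> {1..k} \<subseteq> D)"

definition Dk :: "nat \<Rightarrow> nat \<Rightarrow> nat \<Rightarrow> (nat \<times> nat) set set" where
  "Dk a b k = {D. ferrers D \<and> D \<subseteq> {1..a} \<times> {1..b} \<and> durfee D = k}"

definition Cnk :: "nat \<Rightarrow> nat \<Rightarrow> nat list set" where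
  "Cnk n k = {xs. length xs = k \<and> sorted_wrt (<) xs \<and> set xs \<subseteq> {1..n}}"

definition leC :: "nat list \<Rightarrow> nat list \<Rightarrow> bool" where
  "leC xs ys \<longleftrightarrow> list_all2 (\<le>) xs ys"

definition le_prod :: "('a \<Rightarrow> 'a \<Rightarrow> bool) \<Rightarrow> ('b \<Rightarrow> 'b \<Rightarrow> bool) \<Rightarrow> 'a \<times> 'b \<Rightarrow> 'a \<times> 'b \<Rightarrow> bool" where
  "le_prod r s p q \<longleftrightarrow> r (fst p) (fst q) \<and> s (snd p) (snd q)"

definition poset_iso :: "'a set \<Rightarrow> ('a \<Rightarrow> 'a \<Rightarrow> bool) \<Rightarrow> 'b set \<Rightarrow> ('b \<Rightarrow> 'b \<Rightarrow> bool) \<Rightarrow> ('a \<Rightarrow> 'b) \<Rightarrow> bool" where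
  "poset_iso A leA B leB f \<longleftrightarrow> bij_betw f A B \<and> (\<forall>x\<in>A. \<forall>y\<in>A. leA x y \<longleftrightarrow> leB (f x) (f y))"

end

theory Submission
  imports Defs
begin

definition G :: "nat \<Rightarrow> nat list \<Rightarrow> nat list \<Rightarrow> (nat \<times> nat) set" where
  "G k xs ys = {(i,j). 1 \<le> i \<and> 1 \<le> j \<and> ((j \<le> k \<and> i \<le> xs!(k-j)+j-1) \<or> (i \<le> k \<and> j \<le> ys!(k-i)+i-1))}"

lemma sw_gap:
  assumes "sorted_wrt (<) (xs::nat list)" "p \<le> q" "q < length xs"
  shows "xs!p + (q-p) \<le> xs!q"
  using assms(2,3)
proof (induction q)
  case 0 then show ?case by simp
next
  case (Suc q)
  show ?case
  proof (cases "p = Suc q")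
    case True then show ?thesis by simp
  next
    case False
    then have "p \<le> q" using Suc by simp
    then have "xs!p + (q-p) \<le> xs!q" using Suc by simp
    moreover have "xs!q < xs!(Suc q)" using assms(1) Suc.prems sorted_wrt_nth_less by fastforce
    ultimately show ?thesis using \<open>p \<le> q\<close> by simp
  qed
qed

lemma Cnk_lower:
  assumes "xs \<in> Cnk n k" "q < k"
  shows "q + 1 \<le> xs!q"
proof -
  have "xs!0 \<in> set xs" using assms by (auto simp: Cnk_def)
  moreover have "set xs \<subseteq> {1..n}" using assms by (auto simp: Cnk_def)
  ultimately have "1 \<le> xs!0" by auto
  moreover have "xs!0 + (q-0) \<le> xs!q" using assms by (intro sw_gap) (auto simp: Cnk_def)
  ultimately show ?thesis by simp
qed

lemma Cnk_upper:
  assumes "xs \<in> Cnk n k" "q < k"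
  shows "xs!q + (k-1-q) \<le> n"
proof -
  have "xs!(k-1) \<in> set xs" using assms by (auto simp: Cnk_def)
  moreover have "set xs \<subseteq> {1..n}" using assms by (auto simp: Cnk_def)
  ultimately have "xs!(k-1) \<le> n" by auto
  moreover have "xs!q + (k-1-q) \<le> xs!(k-1)" using assms by (intro sw_gap) (auto simp: Cnk_def)
  ultimately show ?thesis by simp
qed

lemma durfee_eq:
  assumes "{1..k} \<times> {1..k} \<subseteq> D" "(k+1,k+1) \<notin> D"
  shows "durfee D = k"
  unfolding durfee_def
proof (rule Greatest_equality)
  show "{1..k} \<times> {1..k} \<subseteq> D" by fact
  fix y assume "{1..y} \<times> {1..y} \<subseteq> D"
  show "y \<le> k"
  proof (rule ccontr)
    assume "\<not> y \<le> k"
    then have "(k+1,k+1) \<in> {1..y} \<times> {1..y}" by auto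
    then show False using assms(2) \<open>{1..y} \<times> {1..y} \<subseteq> D\<close> by blast
  qed
qed

lemma durfee_props:
  assumes "ferrers D" "D \<subseteq> {1..a} \<times> {1..b}" "durfee D = k"
  shows "{1..k} \<times> {1..k} \<subseteq> D" "(k+1,k+1) \<notin> D"
proof -
  let ?P = "\<lambda>k. {1..k} \<times> {1..k} \<subseteq> D"
  have bd: "\<forall>y. ?P y \<longrightarrow> y \<le> a"
  proof (intro allI impI)
    fix y assume "?P y"
    show "y \<le> a"
    proof (cases "y = 0")
      case False
      then have "(y,y) \<in> D" using \<open>?P y\<close> by auto
      then show ?thesis using assms(2) by auto
    qed simp
  qed
  have "?P 0" by simp
  then have "?P (Greatest ?P)" using bd GreatestI_nat[of ?P 0 a] by blast
  then show "?P k" using assms(3) unfolding durfee_def by simp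
  show "(k+1,k+1) \<notin> D"
  proof
    assume "(k+1,k+1) \<in> D"
    then have "?P (k+1)" using assms(1) unfolding ferrers_def by auto
    then have "k+1 \<le> Greatest ?P" using bd Greatest_le_nat[of ?P "k+1" a] by blast
    then show False using assms(3) unfolding durfee_def by simp
  qed
qed

lemma slice_eq:
  assumes "finite S" "\<forall>i\<in>S. 1 \<le> i" "\<forall>i\<in>S. \<forall>i'. 1 \<le> i' \<longrightarrow> i' \<le> i \<longrightarrow> i' \<in> S"
  shows "S = {1..card S}"
proof (cases "S = {}")
  case False
  have h: "S = {1..Max S}"
  proof
    show "S \<subseteq> {1..Max S}" using assms False by auto
    show "{1..Max S} \<subseteq> S"
    proof
      fix i assume "i \<in> {1..Max S}"
      moreover have "Max S \<in> S" using assms(1) False by simp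
      ultimately show "i \<in> S" using assms(3) by auto
    qed
  qed
  obtain m where hm: "S = {1..m}" using h by blast
  then show ?thesis by simp
qed simp

lemma Cnk_k:
  assumes "xs \<in> Cnk n k" "1 \<le> j" "j \<le> k"
  shows "k \<le> xs!(k-j)+j-1"
  using Cnk_lower[OF assms(1), of "k-j"] assms(2,3) by simp

lemma Cnk_a:
  assumes "xs \<in> Cnk n k" "1 \<le> j" "j \<le> k"
  shows "xs!(k-j)+j-1 \<le> n"
  using Cnk_upper[OF assms(1), of "k-j"] assms(2,3) by simp

lemma Cnk_mono:
  assumes "xs \<in> Cnk n k" "1 \<le> j'" "j' \<le> j" "j \<le> k"
  shows "xs!(k-j)+j-1 \<le> xs!(k-j')+j'-1"
proof -
  have "xs!(k-j) + ((k-j')-(k-j)) \<le> xs!(k-j')"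
    using sw_gap[of xs "k-j" "k-j'"] assms by (auto simp: Cnk_def)
  moreover have "(k-j')-(k-j) = j - j'" using assms by simp
  ultimately show ?thesis using assms by linarith
qed

lemma G_le:
  assumes "xs \<in> Cnk a k" "xs' \<in> Cnk a k" "ys \<in> Cnk b k" "ys' \<in> Cnk b k"
  shows "G k xs ys \<subseteq> G k xs' ys' \<longleftrightarrow> leC xs xs' \<and> leC ys ys'"
proof
  assume sub: "G k xs ys \<subseteq> G k xs' ys'"
  have lx: "length xs = k" "length xs' = k" "length ys = k" "length ys' = k"
    using assms by (auto simp: Cnk_def)
  have "xs!m \<le> xs'!m" if "m < k" for m
  proof -
    define j where "j = k - m"
    have j: "1 \<le> j" "j \<le> k" "k - j = m" using that by (auto simp: j_def)
    define i where "i = xs!m + j - 1"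
    have ik: "k \<le> i" using Cnk_k[OF assms(1) j(1,2)] j(3) by (simp add: i_def)
    have "(i,j) \<in> G k xs ys" using ik j that by (auto simp: G_def i_def)
    then have "(i,j) \<in> G k xs' ys'" using sub by blast
    then have "i \<le> xs'!m + j - 1 \<or> i \<le> k" using j by (auto simp: G_def)
    moreover have "k \<le> xs'!m + j - 1" using Cnk_k[OF assms(2) j(1,2)] j(3) by simp
    ultimately have "i \<le> xs'!m + j - 1" using ik by auto
    then show ?thesis using j by (simp add: i_def)
  qed
  then have 1: "leC xs xs'" using lx by (simp add: leC_def list_all2_conv_all_nth)
  have "ys!m \<le> ys'!m" if "m < k" for m
  proof -
    define i where "i = k - m"
    have j: "1 \<le> i" "i \<le> k" "k - i = m" using that by (auto simp: i_def)
    define jj where "jj = ys!m + i - 1"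
    have ik: "k \<le> jj" using Cnk_k[OF assms(3) j(1,2)] j(3) by (simp add: jj_def)
    have "(i,jj) \<in> G k xs ys" using ik j that by (auto simp: G_def jj_def)
    then have "(i,jj) \<in> G k xs' ys'" using sub by blast
    then have "jj \<le> ys'!m + i - 1 \<or> jj \<le> k" using j by (auto simp: G_def)
    moreover have "k \<le> ys'!m + i - 1" using Cnk_k[OF assms(4) j(1,2)] j(3) by simp
    ultimately have "jj \<le> ys'!m + i - 1" using ik by auto
    then show ?thesis using j by (simp add: jj_def)
  qed
  then have 2: "leC ys ys'" using lx by (simp add: leC_def list_all2_conv_all_nth)
  show "leC xs xs' \<and> leC ys ys'" using 1 2 by simp
next
  assume h: "leC xs xs' \<and> leC ys ys'"
  have hx: "xs!m \<le> xs'!m" "ys!m \<le> ys'!m" if "m < k" for m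
    using h that assms by (auto simp: leC_def list_all2_conv_all_nth Cnk_def)
  show "G k xs ys \<subseteq> G k xs' ys'"
  proof
    fix p assume "p \<in> G k xs ys"
    then obtain i j where p: "p = (i,j)" "1 \<le> i" "1 \<le> j"
      "(j \<le> k \<and> i \<le> xs!(k-j)+j-1) \<or> (i \<le> k \<and> j \<le> ys!(k-i)+i-1)"
      by (auto simp: G_def)
    show "p \<in> G k xs' ys'"
    proof (cases "j \<le> k \<and> i \<le> xs!(k-j)+j-1")
      case True
      have "xs!(k-j) \<le> xs'!(k-j)" using hx(1)[of "k-j"] True p by simp
      then show ?thesis using True p by (auto simp: G_def)
    next
      case False
      then have F: "i \<le> k \<and> j \<le> ys!(k-i)+i-1" using p by blast
      have "ys!(k-i) \<le> ys'!(k-i)" using hx(2)[of "k-i"] F p by simp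
      then show ?thesis using F p by (auto simp: G_def)
    qed
  qed
qed

lemma G_in:
  assumes "xs \<in> Cnk a k" "ys \<in> Cnk b k" "k \<le> min a b"
  shows "G k xs ys \<in> Dk a b k"
proof -
  have sub: "G k xs ys \<subseteq> {1..a} \<times> {1..b}"
  proof
    fix p assume "p \<in> G k xs ys"
    then obtain i j where p: "p = (i,j)" "1 \<le> i" "1 \<le> j"
      "(j \<le> k \<and> i \<le> xs!(k-j)+j-1) \<or> (i \<le> k \<and> j \<le> ys!(k-i)+i-1)"
      by (auto simp: G_def)
    show "p \<in> {1..a} \<times> {1..b}"
    proof (cases "j \<le> k \<and> i \<le> xs!(k-j)+j-1")
      case True
      then show ?thesis using Cnk_a[OF assms(1) p(3)] p assms(3) by auto
    next
      case False
      then have F: "i \<le> k \<and> j \<le> ys!(k-i)+i-1" using p by blast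
      then show ?thesis using Cnk_a[OF assms(2) p(2)] p assms(3) by auto
    qed
  qed
  have fin: "finite (G k xs ys)" using sub finite_subset by blast
  have dc: "(i', j') \<in> G k xs ys" if "(i, j) \<in> G k xs ys" "1 \<le> i'" "i' \<le> i" "1 \<le> j'" "j' \<le> j"
    for i j i' j'
  proof -
    have p: "1 \<le> i" "1 \<le> j"
      "(j \<le> k \<and> i \<le> xs!(k-j)+j-1) \<or> (i \<le> k \<and> j \<le> ys!(k-i)+i-1)"
      using that(1) by (auto simp: G_def)
    show ?thesis
    proof (cases "j \<le> k \<and> i \<le> xs!(k-j)+j-1")
      case True
      then show ?thesis using Cnk_mono[OF assms(1) that(4,5)] that by (auto simp: G_def)
    next
      case False
      then have F: "i \<le> k \<and> j \<le> ys!(k-i)+i-1" using p by blast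
      then show ?thesis using Cnk_mono[OF assms(2) that(2,3)] that by (auto simp: G_def)
    qed
  qed
  have fe: "ferrers (G k xs ys)" unfolding ferrers_def
    using fin dc by (auto simp: G_def)
  have sq: "{1..k} \<times> {1..k} \<subseteq> G k xs ys"
  proof
    fix p assume "p \<in> {1..k} \<times> {1..k}"
    then obtain i j where p: "p = (i,j)" "1 \<le> i" "i \<le> k" "1 \<le> j" "j \<le> k" by auto
    then show "p \<in> G k xs ys" using Cnk_k[OF assms(1) p(4,5)] by (auto simp: G_def)
  qed
  have "(k+1,k+1) \<notin> G k xs ys" by (auto simp: G_def)
  then have "durfee (G k xs ys) = k" using durfee_eq sq by blast
  then show ?thesis using fe sub by (simp add: Dk_def)
qed

lemma seq_from:
  fixes c :: "nat \<Rightarrow> nat"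
  assumes ck: "\<And>j. 1 \<le> j \<Longrightarrow> j \<le> k \<Longrightarrow> k \<le> c j"
    and cm: "\<And>j j'. 1 \<le> j \<Longrightarrow> j \<le> j' \<Longrightarrow> j' \<le> k \<Longrightarrow> c j' \<le> c j"
    and cn: "\<And>j. 1 \<le> j \<Longrightarrow> j \<le> k \<Longrightarrow> c j \<le> n"
  shows "map (\<lambda>m. c (k-m) + 1 - (k-m)) [0..<k] \<in> Cnk n k"
    and "\<And>j. 1 \<le> j \<Longrightarrow> j \<le> k \<Longrightarrow> (map (\<lambda>m. c (k-m) + 1 - (k-m)) [0..<k])!(k-j) + j - 1 = c j"
proof -
  let ?xs = "map (\<lambda>m. c (k-m) + 1 - (k-m)) [0..<k]"
  have "sorted_wrt (<) ?xs"
    unfolding sorted_wrt_iff_nth_less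
  proof (intro allI impI)
    fix i j assume ij: "i < j" "j < length ?xs"
    then have j: "j < k" by simp
    have "c (k-i) \<le> c (k-j)" using cm[of "k-j" "k-i"] ij j by simp
    moreover have "k \<le> c (k-i)" using ck[of "k-i"] ij j by simp
    ultimately show "?xs!i < ?xs!j" using ij j by simp
  qed
  moreover have "set ?xs \<subseteq> {1..n}"
  proof
    fix x assume "x \<in> set ?xs"
    then obtain m where m: "m < k" "x = c (k-m) + 1 - (k-m)" by auto
    have "c (k-m) \<le> n" "k \<le> c (k-m)" using cn[of "k-m"] ck[of "k-m"] m by auto
    then show "x \<in> {1..n}" using m by auto
  qed
  ultimately show "?xs \<in> Cnk n k" by (simp add: Cnk_def)
  fix j assume j: "1 \<le> j" "j \<le> k"
  have "k \<le> c j" using ck j by simp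
  then show "?xs!(k-j) + j - 1 = c j" using j by simp
qed

lemma col_eq:
  assumes "ferrers D" "1 \<le> j"
  shows "(i,j) \<in> D \<longleftrightarrow> 1 \<le> i \<and> i \<le> card {i. (i,j) \<in> D}"
proof -
  let ?S = "{i. (i,j) \<in> D}"
  have "?S \<subseteq> fst ` D" by force
  then have "finite ?S" using assms(1) unfolding ferrers_def by (meson finite_imageI finite_subset)
  moreover have "\<forall>i\<in>?S. 1 \<le> i" using assms(1) unfolding ferrers_def by auto
  moreover have "\<forall>i\<in>?S. \<forall>i'. 1 \<le> i' \<longrightarrow> i' \<le> i \<longrightarrow> i' \<in> ?S"
    using assms unfolding ferrers_def by auto
  ultimately have "?S = {1..card ?S}" by (rule slice_eq)
  then show ?thesis by (metis atLeastAtMost_iff mem_Collect_eq)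
qed

lemma row_eq:
  assumes "ferrers D" "1 \<le> i"
  shows "(i,j) \<in> D \<longleftrightarrow> 1 \<le> j \<and> j \<le> card {j. (i,j) \<in> D}"
proof -
  let ?S = "{j. (i,j) \<in> D}"
  have "?S \<subseteq> snd ` D" by force
  then have "finite ?S" using assms(1) unfolding ferrers_def by (meson finite_imageI finite_subset)
  moreover have "\<forall>i\<in>?S. 1 \<le> i" using assms(1) unfolding ferrers_def by auto
  moreover have "\<forall>j\<in>?S. \<forall>j'. 1 \<le> j' \<longrightarrow> j' \<le> j \<longrightarrow> j' \<in> ?S"
    using assms unfolding ferrers_def by auto
  ultimately have "?S = {1..card ?S}" by (rule slice_eq)
  then show ?thesis by (metis atLeastAtMost_iff mem_Collect_eq)
qed

lemma G_surj:
  assumes D: "D \<in> Dk a b k" and kab: "k \<le> min a b"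
  shows "\<exists>xs\<in>Cnk a k. \<exists>ys\<in>Cnk b k. D = G k xs ys"
proof -
  have fe: "ferrers D" and sub: "D \<subseteq> {1..a} \<times> {1..b}" and du: "durfee D = k"
    using D by (auto simp: Dk_def)
  have sq: "{1..k} \<times> {1..k} \<subseteq> D" and nk: "(k+1,k+1) \<notin> D"
    using durfee_props[OF fe sub du] by auto
  have dc: "\<And>i j i' j'. (i,j)\<in>D \<Longrightarrow> 1\<le>i' \<Longrightarrow> i'\<le>i \<Longrightarrow> 1\<le>j' \<Longrightarrow> j'\<le>j \<Longrightarrow> (i',j')\<in>D"
    using fe unfolding ferrers_def by (elim conjE allE impE) auto
  define c where "c j = card {i. (i,j) \<in> D}" for j
  define r where "r i = card {j. (i,j) \<in> D}" for i
  have cD: "(i,j) \<in> D \<longleftrightarrow> 1 \<le> i \<and> i \<le> c j" if "1 \<le> j" for i j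
    unfolding c_def by (rule col_eq[OF fe that])
  have rD: "(i,j) \<in> D \<longleftrightarrow> 1 \<le> j \<and> j \<le> r i" if "1 \<le> i" for i j
    unfolding r_def by (rule row_eq[OF fe that])
  have ck: "k \<le> c j" if "1 \<le> j" "j \<le> k" for j
  proof -
    have "(k,j) \<in> D" using sq that by auto
    then show ?thesis using cD that by auto
  qed
  have cm: "c j' \<le> c j" if "1 \<le> j" "j \<le> j'" "j' \<le> k" for j j'
  proof -
    have "(c j', j') \<in> D" using cD[of j' "c j'"] ck[of j'] that by auto
    then have "(c j', j) \<in> D" using dc that ck[of j'] by simp
    then show ?thesis using cD that by auto
  qed
  have cn: "c j \<le> a" if "1 \<le> j" "j \<le> k" for j
  proof -
    have "(c j, j) \<in> D" using cD[of j "c j"] ck[of j] that by auto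
    then show ?thesis using sub by auto
  qed
  have rk: "k \<le> r i" if "1 \<le> i" "i \<le> k" for i
  proof -
    have "(i,k) \<in> D" using sq that by auto
    then show ?thesis using rD that by auto
  qed
  have rm: "r i' \<le> r i" if "1 \<le> i" "i \<le> i'" "i' \<le> k" for i i'
  proof -
    have "(i', r i') \<in> D" using rD[of i' "r i'"] rk[of i'] that by auto
    then have "(i, r i') \<in> D" using dc that rk[of i'] by simp
    then show ?thesis using rD that by auto
  qed
  have rn: "r i \<le> b" if "1 \<le> i" "i \<le> k" for i
  proof -
    have "(i, r i) \<in> D" using rD[of i "r i"] rk[of i] that by auto
    then show ?thesis using sub by auto
  qed
  define xs where "xs = map (\<lambda>m. c (k-m) + 1 - (k-m)) [0..<k]"
  define ys where "ys = map (\<lambda>m. r (k-m) + 1 - (k-m)) [0..<k]"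
  have xs: "xs \<in> Cnk a k" "\<And>j. 1 \<le> j \<Longrightarrow> j \<le> k \<Longrightarrow> xs!(k-j) + j - 1 = c j"
    unfolding xs_def using seq_from[of k c a] ck cm cn by auto
  have ys: "ys \<in> Cnk b k" "\<And>i. 1 \<le> i \<Longrightarrow> i \<le> k \<Longrightarrow> ys!(k-i) + i - 1 = r i"
    unfolding ys_def using seq_from[of k r b] rk rm rn by auto
  have "D = G k xs ys"
  proof (rule set_eqI)
    fix p :: "nat \<times> nat"
    obtain i j where p: "p = (i,j)" by fastforce
    show "p \<in> D \<longleftrightarrow> p \<in> G k xs ys"
    proof
      assume "p \<in> D"
      then have pD: "(i,j) \<in> D" using p by simp
      then have ij: "1 \<le> i" "1 \<le> j" using fe unfolding ferrers_def by auto
      show "p \<in> G k xs ys"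
      proof (cases "j \<le> k")
        case True
        then have "i \<le> c j" using cD ij pD by auto
        then show ?thesis using xs(2)[of j] True ij p by (auto simp: G_def)
      next
        case False
        have "i \<le> k"
        proof (rule ccontr)
          assume "\<not> i \<le> k"
          then have "(k+1,k+1) \<in> D" using dc[OF pD, of "k+1" "k+1"] False by simp
          then show False using nk by simp
        qed
        then have "j \<le> r i" using rD ij pD by auto
        then show ?thesis using ys(2)[of i] \<open>i \<le> k\<close> ij p by (auto simp: G_def)
      qed
    next
      assume "p \<in> G k xs ys"
      then have ij: "1 \<le> i" "1 \<le> j"
        "(j \<le> k \<and> i \<le> xs!(k-j)+j-1) \<or> (i \<le> k \<and> j \<le> ys!(k-i)+i-1)"
        using p by (auto simp: G_def)
      show "p \<in> D"
      proof (cases "j \<le> k \<and> i \<le> xs!(k-j)+j-1")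
        case True
        then show ?thesis using xs(2)[of j] cD[of j i] ij p by auto
      next
        case False
        then have F: "i \<le> k \<and> j \<le> ys!(k-i)+i-1" using ij by blast
        then show ?thesis using ys(2)[of i] rD[of i j] ij p by auto
      qed
    qed
  qed
  then show ?thesis using xs(1) ys(1) by blast
qed

lemma leC_antisym: "leC xs ys \<Longrightarrow> leC ys xs \<Longrightarrow> xs = ys"
  unfolding leC_def by (rule list_all2_antisym) auto

theorem proposition1p12:
  fixes a b k :: nat
  assumes "k \<le> min a b"
  shows "\<exists>f. poset_iso (Dk a b k) (\<subseteq>) (Cnk a k \<times> Cnk b k) (le_prod leC leC) f"
proof -
  let ?B = "Cnk a k \<times> Cnk b k"
  let ?A = "Dk a b k"
  define g where "g = (\<lambda>p. G k (fst p) (snd p))"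
  have ord: "g p \<subseteq> g q \<longleftrightarrow> le_prod leC leC p q" if "p \<in> ?B" "q \<in> ?B" for p q
    using G_le[of "fst p" a k "fst q" "snd p" b "snd q"] that
    by (auto simp: g_def le_prod_def mem_Times_iff)
  have inj: "inj_on g ?B"
  proof (rule inj_onI)
    fix p q assume pq: "p \<in> ?B" "q \<in> ?B" "g p = g q"
    then have "le_prod leC leC p q" "le_prod leC leC q p" using ord[of p q] ord[of q p] by auto
    then have "fst p = fst q" "snd p = snd q" using leC_antisym by (auto simp: le_prod_def)
    then show "p = q" by (simp add: prod_eq_iff)
  qed
  have img: "g ` ?B = ?A"
  proof
    show "g ` ?B \<subseteq> ?A" using G_in assms by (auto simp: g_def)
    show "?A \<subseteq> g ` ?B"
    proof
      fix D assume "D \<in> ?A"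
      then obtain xs ys where "xs \<in> Cnk a k" "ys \<in> Cnk b k" "D = G k xs ys"
        using G_surj assms by blast
      then show "D \<in> g ` ?B" unfolding g_def by (intro image_eqI[of _ _ "(xs,ys)"]) auto
    qed
  qed
  have bij: "bij_betw g ?B ?A" using inj img by (simp add: bij_betw_def)
  define f where "f = inv_into ?B g"
  have bf: "bij_betw f ?A ?B" unfolding f_def by (rule bij_betw_inv_into[OF bij])
  have "\<forall>x\<in>?A. \<forall>y\<in>?A. x \<subseteq> y \<longleftrightarrow> le_prod leC leC (f x) (f y)"
  proof (intro ballI)
    fix x y assume xy: "x \<in> ?A" "y \<in> ?A"
    have gx: "g (f x) = x" "g (f y) = y" unfolding f_def using xy img f_inv_into_f[of x g ?B] f_inv_into_f[of y g ?B] by auto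
    have "f x \<in> ?B" "f y \<in> ?B" using xy bf by (auto simp: bij_betw_def)
    then show "x \<subseteq> y \<longleftrightarrow> le_prod leC leC (f x) (f y)" using ord gx by metis
  qed
  then show ?thesis using bf unfolding poset_iso_def by blast
qed

end
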